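(* Let $\Omega\subset\mathbb{R}^N$ ($N\ge2$) be a bounded smooth domain, $1<q<2$, $b\in C^\alpha(\overline\Omega)$ with $\Omega^b_+\neq\emptyset$ and $\int_\Omega b\le0$. For $\epsilon>0$ small (so that $\{b>\epsilon\}\neq\emptyset$), let $\lambda_\epsilon>0$ be the positive principal eigenvalue of $-\Delta\varphi=\lambda(b-\epsilon)\epsilon^{q-2}\varphi$ in $\Omega$, $\frac{\partial\varphi}{\partial\mathbf{n}}=0$ on $\partial\Omega$. Then $\lim_{\epsilon\to0^+}\lambda_\epsilon=0$.
   Context: $\Omega^b_+=\{x\in\Omega:b(x)>0\}$. A principal eigenvalue is one having a positive eigenfunction; for such $\epsilon$ the problem has exactly two principal eigenvalues, $0$ and $\lambda_\epsilon>0$. *)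

theory Defs
  imports "HOL-Analysis.Analysis"
begin

fun Ck_on :: "nat \<Rightarrow> 'a::real_normed_vector set \<Rightarrow> ('a \<Rightarrow> real) \<Rightarrow> bool" where
  "Ck_on 0 S f \<longleftrightarrow> continuous_on S f"
| "Ck_on (Suc k) S f \<longleftrightarrow> (\<forall>x\<in>S. f differentiable (at x)) \<and>
      (\<forall>v. Ck_on k S (\<lambda>x. frechet_derivative f (at x) v))"

definition smooth_on :: "'a::real_normed_vector set \<Rightarrow> ('a \<Rightarrow> real) \<Rightarrow> bool" where
  "smooth_on S f \<longleftrightarrow> (\<forall>k. Ck_on k S f)"

definition pderiv_i :: "'n::finite \<Rightarrow> (real^'n \<Rightarrow> real) \<Rightarrow> real^'n \<Rightarrow> real" where
  "pderiv_i i f x = frechet_derivative f (at x) (axis i 1)"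

definition grad :: "(real^'n::finite \<Rightarrow> real) \<Rightarrow> real^'n \<Rightarrow> real^'n" where
  "grad f x = (\<chi> i. pderiv_i i f x)"

definition laplacian :: "(real^'n::finite \<Rightarrow> real) \<Rightarrow> real^'n \<Rightarrow> real" where
  "laplacian f x = (\<Sum>i\<in>UNIV. pderiv_i i (pderiv_i i f) x)"

text \<open>Its gradient at x is then an
  outward normal vector.\<close>
definition local_defining_fn :: "(real^'n::finite) set \<Rightarrow> real^'n \<Rightarrow> real \<Rightarrow> (real^'n \<Rightarrow> real) \<Rightarrow> bool" where
  "local_defining_fn \<Omega> x r \<rho> \<longleftrightarrow> 0 < r \<and> smooth_on (ball x r) \<rho> \<and>
     (\<forall>y\<in>ball x r. grad \<rho> y \<noteq> 0) \<and>
     \<Omega> \<inter> ball x r = {y\<in>ball x r. \<rho> y < 0} \<and>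
     frontier \<Omega> \<inter> ball x r = {y\<in>ball x r. \<rho> y = 0}"

definition bounded_smooth_domain :: "(real^'n::finite) set \<Rightarrow> bool" where
  "bounded_smooth_domain \<Omega> \<longleftrightarrow> open \<Omega> \<and> connected \<Omega> \<and> bounded \<Omega> \<and> \<Omega> \<noteq> {} \<and>
     (\<forall>x\<in>frontier \<Omega>. \<exists>r \<rho>. local_defining_fn \<Omega> x r \<rho>)"

definition holder_on :: "real \<Rightarrow> ('a::metric_space) set \<Rightarrow> ('a \<Rightarrow> real) \<Rightarrow> bool" where
  "holder_on \<alpha> S b \<longleftrightarrow> (\<exists>C. \<forall>x\<in>S. \<forall>y\<in>S. \<bar>b x - b y\<bar> \<le> C * dist x y powr \<alpha>)"

definition principal_neumann_eigenvalue ::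
  "(real^'n::finite) set \<Rightarrow> (real^'n \<Rightarrow> real) \<Rightarrow> real \<Rightarrow> bool" where
  "principal_neumann_eigenvalue \<Omega> w lam \<longleftrightarrow>
     (\<exists>\<phi> D. Ck_on 2 \<Omega> \<phi> \<and>
        (\<forall>x\<in>closure \<Omega>. (\<phi> has_derivative D x) (at x within closure \<Omega>)) \<and>
        (\<forall>v. continuous_on (closure \<Omega>) (\<lambda>x. D x v)) \<and>
        (\<forall>x\<in>\<Omega>. \<phi> x > 0) \<and>
        (\<forall>x\<in>\<Omega>. - laplacian \<phi> x = lam * w x * \<phi> x) \<and>
        (\<forall>x\<in>frontier \<Omega>. \<forall>r \<rho>. local_defining_fn \<Omega> x r \<rho> \<longrightarrow> D x (grad \<rho> x) = 0))"

end

theory Submission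
  imports Defs
begin

lemma dir_deriv:
  fixes f :: "'a::real_normed_vector \<Rightarrow> real"
  assumes "f differentiable (at (p + s0 *\<^sub>R v))"
  shows "((\<lambda>s. f (p + s *\<^sub>R v)) has_real_derivative frechet_derivative f (at (p + s0 *\<^sub>R v)) v) (at s0)"
proof -
  let ?D = "frechet_derivative f (at (p + s0 *\<^sub>R v))"
  have D: "(f has_derivative ?D) (at (p + s0 *\<^sub>R v))"
    using assms frechet_derivative_works by blast
  have L: "((\<lambda>s. p + s *\<^sub>R v) has_derivative (\<lambda>h. h *\<^sub>R v)) (at s0)"
    by (auto intro!: derivative_eq_intros)
  have C: "((\<lambda>s. f (p + s *\<^sub>R v)) has_derivative (\<lambda>h. ?D (h *\<^sub>R v))) (at s0)"
    using diff_chain_at[OF L D] by (simp add: o_def)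
  have lin: "linear ?D" using D has_derivative_linear by blast
  have "(\<lambda>h. ?D (h *\<^sub>R v)) = (*) (?D v)"
    using linear_scale[OF lin] by (auto simp: mult.commute)
  then show ?thesis using C by (simp add: has_field_derivative_def)
qed

lemma second_deriv_min:
  fixes f f' :: "real \<Rightarrow> real"
  assumes d: "d > 0" and D1: "\<And>s. \<bar>s\<bar> < d \<Longrightarrow> (f has_real_derivative f' s) (at s)"
    and D2: "(f' has_real_derivative c) (at 0)"
    and mn: "\<And>s. \<bar>s\<bar> < d \<Longrightarrow> f s \<ge> f 0"
  shows "c \<ge> 0"
proof (rule ccontr)
  assume "\<not> c \<ge> 0" hence c: "c < 0" by simp
  have "f' 0 = 0"
    apply (rule DERIV_local_min[OF D1[of 0] d]) using d mn by auto
  obtain e where e: "e > 0" "\<And>h. h > 0 \<Longrightarrow> h < e \<Longrightarrow> f' (0 + h) < f' 0"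
    using DERIV_neg_dec_right[OF D2 c] by blast
  define h where "h = min e d / 2"
  have h: "h > 0" "h < e" "h < d" using e d by (auto simp: h_def)
  have "\<forall>x. 0 \<le> x \<and> x \<le> h \<longrightarrow> (f has_real_derivative f' x) (at x)"
    using h D1 by auto
  then obtain z where z: "z > 0" "z < h" "f h - f 0 = (h - 0) * f' z"
    using MVT2[of 0 h f f'] h by blast
  have "f' z < 0" using e(2)[of z] z h \<open>f' 0 = 0\<close> by simp
  hence "f h - f 0 < 0" using z h by (simp add: mult_pos_neg)
  moreover have "f h \<ge> f 0" using mn[of h] h by simp
  ultimately show False by simp
qed


lemma Ck2_unfold:
  assumes "Ck_on 2 \<Omega> \<phi>"
  shows "\<forall>x\<in>\<Omega>. \<phi> differentiable (at x)"
    and "\<And>v. \<forall>x\<in>\<Omega>. (\<lambda>x. frechet_derivative \<phi> (at x) v) differentiable (at x)"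
  using assms by (auto simp: numeral_2_eq_2)

lemma box_cart_iff:
  fixes x0 x :: "real^'n"
  shows "x \<in> box (x0 - (\<chi> j. a)) (x0 + (\<chi> j. a)) \<longleftrightarrow> (\<forall>j. \<bar>x$j - x0$j\<bar> < a)"
    and "x \<in> cbox (x0 - (\<chi> j. a)) (x0 + (\<chi> j. a)) \<longleftrightarrow> (\<forall>j. \<bar>x$j - x0$j\<bar> \<le> a)"
  by (auto simp: mem_box_cart abs_less_iff abs_le_iff algebra_simps)

lemma psi_line:
  fixes p x0 :: "real^'n"
  shows "(\<Prod>j\<in>UNIV. cos (c * ((p + s *\<^sub>R axis i 1)$j - x0$j)))
     = (\<Prod>j\<in>UNIV-{i}. cos (c * (p$j - x0$j))) * cos (c * (p$i - x0$i) + c * s)"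
proof -
  have "(\<Prod>j\<in>UNIV. cos (c * ((p + s *\<^sub>R axis i 1)$j - x0$j)))
     = cos (c * ((p + s *\<^sub>R axis i 1)$i - x0$i)) * (\<Prod>j\<in>UNIV-{i}. cos (c * ((p + s *\<^sub>R axis i 1)$j - x0$j)))"
    by (rule prod.remove) auto
  also have "(\<Prod>j\<in>UNIV-{i}. cos (c * ((p + s *\<^sub>R axis i 1)$j - x0$j))) = (\<Prod>j\<in>UNIV-{i}. cos (c * (p$j - x0$j)))"
    by (rule prod.cong) (auto simp: axis_def)
  finally show ?thesis by (simp add: axis_def algebra_simps)
qed



lemma barta:
  fixes \<phi> :: "real^'n \<Rightarrow> real" and x0 :: "real^'n"
  assumes Ck2: "Ck_on 2 \<Omega> \<phi>" and pos: "\<forall>x\<in>\<Omega>. \<phi> x > 0" and a: "a > 0"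
    and sub: "cbox (x0 - (\<chi> j. a)) (x0 + (\<chi> j. a)) \<subseteq> \<Omega>"
  shows "\<exists>p\<in>box (x0 - (\<chi> j. a)) (x0 + (\<chi> j. a)).
           - laplacian \<phi> p \<le> real CARD('n) * (pi / (2*a))^2 * \<phi> p"
proof -
  define c where "c = pi / (2*a)"
  have c: "c > 0" "c * a = pi/2" using a by (auto simp: c_def)
  define \<psi> where "\<psi> x = (\<Prod>j\<in>UNIV. cos (c * (x$j - x0$j)))" for x :: "real^'n"
  define Q where "Q = box (x0 - (\<chi> j. a)) (x0 + (\<chi> j. a))"
  define Qc where "Qc = cbox (x0 - (\<chi> j. a)) (x0 + (\<chi> j. a))"
  have diff: "\<forall>x\<in>\<Omega>. \<phi> differentiable (at x)" using Ck2_unfold[OF Ck2] by blast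
  have contphi: "continuous_on \<Omega> \<phi>"
    by (meson continuous_at_imp_continuous_on diff differentiable_imp_continuous_within)
  have contpsi: "continuous_on UNIV \<psi>" unfolding \<psi>_def by (auto intro!: continuous_intros)
  have QQc: "Q \<subseteq> Qc" unfolding Q_def Qc_def using box_subset_cbox .
  have Qopen: "open Q" unfolding Q_def by (rule open_box)
  have Qccomp: "compact Qc" unfolding Qc_def by simp
  have x0Q: "x0 \<in> Q" unfolding Q_def box_cart_iff using a by simp
  have psix0: "\<psi> x0 = 1" by (simp add: \<psi>_def)
  have psipos: "\<psi> x > 0" if "x \<in> Q" for x
  proof -
    have "\<forall>j. \<bar>x$j - x0$j\<bar> < a" using that unfolding Q_def box_cart_iff .
    hence "\<forall>j. 0 < cos (c * (x$j - x0$j))"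
    proof (intro allI)
      fix j assume "\<forall>j. \<bar>x$j - x0$j\<bar> < a"
      hence h: "\<bar>x$j - x0$j\<bar> < a" by blast
      have "\<bar>c * (x$j - x0$j)\<bar> < c * a" using h c by (simp add: abs_mult)
      thus "0 < cos (c * (x$j - x0$j))" using c by (intro cos_gt_zero_pi) auto
    qed
    thus ?thesis unfolding \<psi>_def by (intro prod_pos) auto
  qed
  have psizero: "\<psi> x = 0" if "x \<in> Qc" "x \<notin> Q" for x
  proof -
    from that obtain j where j: "\<bar>x$j - x0$j\<bar> = a"
      unfolding Q_def Qc_def box_cart_iff by (meson order_le_less)
    have "cos (c * (x$j - x0$j)) = 0"
    proof (cases "x$j - x0$j \<ge> 0")
      case True then have "x$j - x0$j = a" using j by simp
      then show ?thesis by (simp add: c(2))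
    next
      case False then have "x$j - x0$j = - a" using j by simp
      then show ?thesis by (simp add: c(2))
    qed
    thus ?thesis unfolding \<psi>_def by (intro prod_zero) auto
  qed
  have x0Qc: "x0 \<in> Qc" using x0Q QQc by blast
  have QcO: "Qc \<subseteq> \<Omega>" using sub Qc_def by simp
  obtain xm where xm: "xm \<in> Qc" "\<forall>y\<in>Qc. \<phi> xm \<le> \<phi> y"
    using continuous_attains_inf[OF Qccomp, of \<phi>] x0Qc continuous_on_subset[OF contphi QcO] by blast
  define m where "m = \<phi> xm"
  have m: "m > 0" using xm QcO pos m_def by auto
  have phix0: "\<phi> x0 > 0" using x0Qc QcO pos by auto
  define \<delta> where "\<delta> = m / \<phi> x0"
  have \<delta>: "\<delta> > 0" "\<delta> \<le> 1" "\<delta> * \<phi> x0 = m" using m phix0 xm x0Qc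
    by (auto simp: \<delta>_def m_def)
  define K where "K = Qc \<inter> {x. \<delta> \<le> \<psi> x}"
  have Kcomp: "compact K" unfolding K_def
    by (intro compact_Int_closed Qccomp closed_Collect_le continuous_on_const contpsi)
  have KQ: "K \<subseteq> Q" using psizero \<delta> by (force simp: K_def)
  have x0K: "x0 \<in> K" using x0Qc psix0 \<delta> by (simp add: K_def)
  have contr: "continuous_on K (\<lambda>x. \<phi> x / \<psi> x)"
    apply (intro continuous_on_divide continuous_on_subset[OF contphi] continuous_on_subset[OF contpsi])
    using KQ QQc QcO psipos by force+
  obtain p where p: "p \<in> K" "\<forall>y\<in>K. \<phi> p / \<psi> p \<le> \<phi> y / \<psi> y"
    using continuous_attains_inf[OF Kcomp _ contr] x0K by blast
  define t where "t = \<phi> p / \<psi> p"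
  have pQ: "p \<in> Q" using p KQ by blast
  have psip: "\<psi> p > 0" using psipos pQ by blast
  have tp: "t * \<psi> p = \<phi> p" using psip by (simp add: t_def)
  have tle: "t \<le> \<phi> x0" using p(2) x0K psix0 unfolding t_def by (metis div_by_1)
  have ge: "\<phi> y \<ge> t * \<psi> y" if "y \<in> Q" for y
  proof (cases "\<delta> \<le> \<psi> y")
    case True
    then have "y \<in> K" using that QQc by (auto simp: K_def)
    then have "t \<le> \<phi> y / \<psi> y" using p(2) t_def by simp
    then show ?thesis using psipos[OF that] by (simp add: pos_le_divide_eq)
  next
    case False
    have "\<phi> y \<ge> m" using xm that QQc m_def by auto
    moreover have "t * \<psi> y \<le> \<phi> x0 * \<psi> y" using tle psipos[OF that] by (simp add: mult_right_mono)
    moreover have "\<phi> x0 * \<psi> y \<le> \<phi> x0 * \<delta>" using False phix0 by simp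
    ultimately show ?thesis using \<delta>(3) by (simp add: mult.commute)
  qed
  obtain d where d: "d > 0" "ball p d \<subseteq> Q" using Qopen pQ open_contains_ball by blast
  have line: "p + s *\<^sub>R axis i 1 \<in> Q" if "\<bar>s\<bar> < d" for s i
  proof -
    have "dist p (p + s *\<^sub>R axis i 1) = \<bar>s\<bar>" by (simp add: dist_norm)
    thus ?thesis using d that by auto
  qed
  have QO: "Q \<subseteq> \<Omega>" using QQc QcO by blast
  have each: "pderiv_i i (pderiv_i i \<phi>) p \<ge> - (c^2 * \<phi> p)" for i
  proof -
    define C where "C = (\<Prod>j\<in>UNIV-{i}. cos (c * (p$j - x0$j)))"
    define \<theta> where "\<theta> = c * (p$i - x0$i)"
    have psiline: "\<psi> (p + s *\<^sub>R axis i 1) = C * cos (\<theta> + c * s)" for s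
      unfolding \<psi>_def C_def \<theta>_def by (rule psi_line)
    have Ctheta: "C * cos \<theta> = \<psi> p" using psiline[of 0] by simp
    define g where "g x = frechet_derivative \<phi> (at x) (axis i 1)" for x
    have pd: "pderiv_i i \<phi> = g" by (auto simp: pderiv_i_def g_def)
    define f where "f s = \<phi> (p + s *\<^sub>R axis i 1) - t * (C * cos (\<theta> + c * s))" for s
    define f' where "f' s = g (p + s *\<^sub>R axis i 1) - t * (C * (- sin (\<theta> + c * s) * c))" for s
    define cc where "cc = frechet_derivative g (at p) (axis i 1) - t * (C * (- cos \<theta> * c * c))"
    have D1: "(f has_real_derivative f' s) (at s)" if "\<bar>s\<bar> < d" for s
    proof -
      have dphi: "\<phi> differentiable (at (p + s *\<^sub>R axis i 1))" using diff line[OF that] QO by blast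
      show ?thesis unfolding f_def f'_def g_def
        by (auto intro!: derivative_eq_intros dir_deriv[OF dphi])
    qed
    have gdiff: "g differentiable (at p)" using Ck2_unfold(2)[OF Ck2, of "axis i 1"] pQ QO
      unfolding g_def by blast
    have D2: "(f' has_real_derivative cc) (at 0)"
      unfolding f'_def cc_def
      using dir_deriv[of g p 0 "axis i 1"] gdiff
      by (auto intro!: derivative_eq_intros)
    have mn: "f s \<ge> f 0" if "\<bar>s\<bar> < d" for s
    proof -
      have "f 0 = 0" using tp psiline[of 0] by (simp add: f_def)
      moreover have "f s \<ge> 0" using ge[OF line[OF that, of i]] psiline[of s] by (simp add: f_def)
      ultimately show ?thesis by simp
    qed
    have "cc \<ge> 0" by (rule second_deriv_min[OF d(1) D1 D2 mn])
    moreover have "pderiv_i i (pderiv_i i \<phi>) p = frechet_derivative g (at p) (axis i 1)"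
      by (simp add: pd pderiv_i_def)
    moreover have "t * (C * (- cos \<theta> * c * c)) = - (c^2 * \<phi> p)"
    proof -
      have "t * (C * (- cos \<theta> * c * c)) = - (c^2 * (t * (C * cos \<theta>)))"
        by (simp add: power2_eq_square algebra_simps)
      thus ?thesis using Ctheta tp by simp
    qed
    ultimately show ?thesis unfolding cc_def by linarith
  qed
  have "laplacian \<phi> p \<ge> (\<Sum>i\<in>(UNIV::'n set). - (c^2 * \<phi> p))"
    unfolding laplacian_def by (rule sum_mono, rule each)
  hence "- laplacian \<phi> p \<le> real CARD('n) * c^2 * \<phi> p" by simp
  thus ?thesis using pQ unfolding Q_def c_def by blast
qed



theorem lemma6p6:
  fixes \<Omega> :: "(real^'n) set" and b :: "real^'n \<Rightarrow> real" and q \<alpha> :: real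
  assumes "CARD('n) \<ge> 2"
    and "bounded_smooth_domain \<Omega>"
    and "1 < q" and "q < 2"
    and "0 < \<alpha>" and "\<alpha> < 1"
    and "continuous_on (closure \<Omega>) b" and "holder_on \<alpha> (closure \<Omega>) b"
    and "\<exists>x\<in>\<Omega>. b x > 0"
    and "integral \<Omega> b \<le> 0"
  shows "\<forall>e>0. \<forall>\<^sub>F \<epsilon> in at_right 0.
           \<forall>lam>0. principal_neumann_eigenvalue \<Omega> (\<lambda>x. (b x - \<epsilon>) * \<epsilon> powr (q - 2)) lam
                  \<longrightarrow> lam < e"
proof (intro allI impI)
  fix e :: real assume e: "e > 0"
  have op: "open \<Omega>" using assms(2) by (simp add: bounded_smooth_domain_def)
  obtain x1 where x1: "x1 \<in> \<Omega>" "b x1 > 0" using assms(9) by blast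
  define \<beta> where "\<beta> = b x1 / 2"
  have \<beta>: "\<beta> > 0" using x1 by (simp add: \<beta>_def)
  have "continuous_on \<Omega> b" using assms(7) closure_subset continuous_on_subset by blast
  hence cb: "isCont b x1" using continuous_on_eq_continuous_at[OF op] x1 by blast
  obtain r1 where r1: "r1 > 0" "\<And>y. dist y x1 < r1 \<Longrightarrow> dist (b y) (b x1) < \<beta>"
    using cb \<beta> unfolding continuous_at_eps_delta by blast
  obtain r2 where r2: "r2 > 0" "ball x1 r2 \<subseteq> \<Omega>" using op x1 open_contains_ball by blast
  define r0 where "r0 = min r1 r2"
  have r0: "r0 > 0" using r1 r2 by (simp add: r0_def)
  have ballok: "y \<in> \<Omega> \<and> b y > \<beta>" if "dist y x1 < r0" for y
  proof -
    have "y \<in> ball x1 r2" using that r0_def by (simp add: dist_commute)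
    moreover have "dist (b y) (b x1) < \<beta>" using r1(2) that r0_def by simp
    moreover have "\<bar>b y - b x1\<bar> < \<beta>" using \<open>dist (b y) (b x1) < \<beta>\<close> by (simp add: dist_real_def)
    ultimately have "b x1 - b y < \<beta>" "y \<in> ball x1 r2" by (auto simp: abs_less_iff)
    moreover have "b x1 = 2 * \<beta>" by (simp add: \<beta>_def)
    ultimately show ?thesis using r2 by auto
  qed
  define a where "a = r0 / (2 * real CARD('n))"
  have a: "a > 0" using r0 by (simp add: a_def)
  have cb_ball: "dist y x1 < r0" if "y \<in> cbox (x1 - (\<chi> j. a)) (x1 + (\<chi> j. a))" for y
  proof -
    have h: "\<forall>j. \<bar>y$j - x1$j\<bar> \<le> a" using that unfolding box_cart_iff .
    have "dist y x1 = norm (y - x1)" by (simp add: dist_norm)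
    also have "\<dots> \<le> (\<Sum>j\<in>UNIV. \<bar>(y - x1)$j\<bar>)" by (rule norm_le_l1_cart)
    also have "\<dots> \<le> (\<Sum>j\<in>(UNIV::'n set). a)" using h by (intro sum_mono) simp
    also have "\<dots> = r0 / 2" using a_def by simp
    finally show ?thesis using r0 by simp
  qed
  have sub: "cbox (x1 - (\<chi> j. a)) (x1 + (\<chi> j. a)) \<subseteq> \<Omega>" using cb_ball ballok by blast
  define \<mu> where "\<mu> = real CARD('n) * (pi / (2*a))^2"
  have \<mu>: "\<mu> \<ge> 0" by (simp add: \<mu>_def)
  have tl: "((\<lambda>\<epsilon>. 2 * \<mu> / \<beta> * \<epsilon> powr (2 - q)) \<longlongrightarrow> 2 * \<mu> / \<beta> * 0) (at_right 0)"
    apply (intro tendsto_mult tendsto_const tendsto_zero_powrI[where b = "2 - q"])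
    using assms(4) by (auto simp: eventually_at_right_less intro!: tendsto_ident_at eventually_at_rightI[where b=1])
  have ev1: "\<forall>\<^sub>F \<epsilon> in at_right 0. 2 * \<mu> / \<beta> * \<epsilon> powr (2 - q) < e"
    using order_tendstoD(2)[OF tl] e by simp
  have ev2: "\<forall>\<^sub>F \<epsilon> in at_right 0. 0 < \<epsilon> \<and> \<epsilon> < \<beta> / 2"
    using \<beta> by (intro eventually_at_rightI[where b="\<beta>/2"]) auto
  show "\<forall>\<^sub>F \<epsilon> in at_right 0.
           \<forall>lam>0. principal_neumann_eigenvalue \<Omega> (\<lambda>x. (b x - \<epsilon>) * \<epsilon> powr (q - 2)) lam
                  \<longrightarrow> lam < e"
    using ev1 ev2
  proof eventually_elim
    case (elim \<epsilon>)
    show ?case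
    proof (intro allI impI)
      fix lam :: real assume lam: "lam > 0"
        "principal_neumann_eigenvalue \<Omega> (\<lambda>x. (b x - \<epsilon>) * \<epsilon> powr (q - 2)) lam"
      then obtain \<phi> where \<phi>: "Ck_on 2 \<Omega> \<phi>" "\<forall>x\<in>\<Omega>. \<phi> x > 0"
        "\<forall>x\<in>\<Omega>. - laplacian \<phi> x = lam * ((b x - \<epsilon>) * \<epsilon> powr (q - 2)) * \<phi> x"
        unfolding principal_neumann_eigenvalue_def by blast
      obtain p where p: "p \<in> box (x1 - (\<chi> j. a)) (x1 + (\<chi> j. a))"
        "- laplacian \<phi> p \<le> \<mu> * \<phi> p"
        using barta[OF \<phi>(1,2) a sub] unfolding \<mu>_def by blast
      have pb: "p \<in> \<Omega>" "b p > \<beta>" using ballok cb_ball p(1) box_subset_cbox by blast+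
      define w where "w = (b p - \<epsilon>) * \<epsilon> powr (q - 2)"
      have "lam * w * \<phi> p \<le> \<mu> * \<phi> p" using p(2) \<phi>(3) pb w_def by simp
      hence lw: "lam * w \<le> \<mu>" using \<phi>(2) pb by simp
      have ep: "\<epsilon> powr (q - 2) > 0" using elim by simp
      have "w \<ge> \<beta> / 2 * \<epsilon> powr (q - 2)" unfolding w_def
        using elim pb ep by (intro mult_right_mono) auto
      hence "lam * (\<beta> / 2 * \<epsilon> powr (q - 2)) \<le> \<mu>"
        using lw lam(1) by (meson mult_left_mono less_imp_le order_trans)
      hence "lam * (\<beta> / 2 * \<epsilon> powr (q - 2)) * \<epsilon> powr (2 - q) \<le> \<mu> * \<epsilon> powr (2 - q)"
        using elim by (intro mult_right_mono) auto
      moreover have "\<epsilon> powr (q - 2) * \<epsilon> powr (2 - q) = 1"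
        using elim by (simp add: powr_add[symmetric])
      ultimately have "lam * (\<beta> / 2) \<le> \<mu> * \<epsilon> powr (2 - q)"
        by (simp add: algebra_simps)
      hence "lam \<le> 2 * \<mu> / \<beta> * \<epsilon> powr (2 - q)"
        using \<beta> by (simp add: field_simps)
      thus "lam < e" using elim by simp
    qed
  qed
qed
end
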